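(* Let $a,b,c\in\mathcal V(\mathcal B)$ with $a\le_t b\le_t c$. Then (1) $(a\wedge\mathcal U)\otimes(c\vee\mathcal U)\le_k\mathcal U$; (2) $(a\vee\mathcal U)\otimes c\le_k b$; (3) $(a\wedge\mathcal U)\otimes(c\wedge\mathcal U)\le_k b$.
   Context: A bilattice $\langle\mathcal B,\le_t,\le_k\rangle$ is a nonempty set with two partial orders, each making $\mathcal B$ a lattice with top and bottom. Under $\le_t$, meet and join are $\wedge,\vee$, bottom $\mathcal F$, top $\mathcal T$; under $\le_k$, meet and join are $\otimes,\oplus$, bottom $\mathcal U$, top $\mathcal I$. Standing assumptions: $\mathcal B$ is complete for both orders, infinitely distributive, satisfies the (infinitary) interlacing conditions (each of $\wedge,\vee,\otimes,\oplus$ is monotone with respect to both orderings), and has a negation. $\mathcal V(\mathcal B)$ is the set of maps from ground atoms (of a fixed first-order language) to $\mathcal B$ with pointwise orders and operations; $\mathcal U$ also denotes the constant map with value $\mathcal U$. *)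

theory Defs
  imports Main
begin

text \<open>A bilattice is represented by its carrier type 'b together with the two
orders lt (truth order) and lk (knowledge order) and a negation neg.\<close>

definition is_lub :: "('b \<Rightarrow> 'b \<Rightarrow> bool) \<Rightarrow> 'b set \<Rightarrow> 'b \<Rightarrow> bool" where
  "is_lub le A x \<longleftrightarrow> (\<forall>a\<in>A. le a x) \<and> (\<forall>y. (\<forall>a\<in>A. le a y) \<longrightarrow> le x y)"

definition is_glb :: "('b \<Rightarrow> 'b \<Rightarrow> bool) \<Rightarrow> 'b set \<Rightarrow> 'b \<Rightarrow> bool" where
  "is_glb le A x \<longleftrightarrow> (\<forall>a\<in>A. le x a) \<and> (\<forall>y. (\<forall>a\<in>A. le y a) \<longrightarrow> le y x)"

definition lsup :: "('b \<Rightarrow> 'b \<Rightarrow> bool) \<Rightarrow> 'b set \<Rightarrow> 'b" where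
  "lsup le A = (THE x. is_lub le A x)"

definition linf :: "('b \<Rightarrow> 'b \<Rightarrow> bool) \<Rightarrow> 'b set \<Rightarrow> 'b" where
  "linf le A = (THE x. is_glb le A x)"

definition bjoin :: "('b \<Rightarrow> 'b \<Rightarrow> bool) \<Rightarrow> 'b \<Rightarrow> 'b \<Rightarrow> 'b" where
  "bjoin le x y = lsup le {x, y}"

definition bmeet :: "('b \<Rightarrow> 'b \<Rightarrow> bool) \<Rightarrow> 'b \<Rightarrow> 'b \<Rightarrow> 'b" where
  "bmeet le x y = linf le {x, y}"

definition btop :: "('b \<Rightarrow> 'b \<Rightarrow> bool) \<Rightarrow> 'b" where
  "btop le = lsup le UNIV"

definition bbot :: "('b \<Rightarrow> 'b \<Rightarrow> bool) \<Rightarrow> 'b" where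
  "bbot le = linf le UNIV"

definition porder :: "('b \<Rightarrow> 'b \<Rightarrow> bool) \<Rightarrow> bool" where
  "porder le \<longleftrightarrow> (\<forall>x. le x x) \<and> (\<forall>x y z. le x y \<longrightarrow> le y z \<longrightarrow> le x z)
     \<and> (\<forall>x y. le x y \<longrightarrow> le y x \<longrightarrow> x = y)"

definition complete_order :: "('b \<Rightarrow> 'b \<Rightarrow> bool) \<Rightarrow> bool" where
  "complete_order le \<longleftrightarrow> porder le \<and> (\<forall>A. \<exists>x. is_lub le A x) \<and> (\<forall>A. \<exists>x. is_glb le A x)"

text \<open>A family is represented by its set S of pairs.\<close>
definition inf_monotone :: "('b \<Rightarrow> 'b \<Rightarrow> bool) \<Rightarrow> ('b set \<Rightarrow> 'b) \<Rightarrow> bool" where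
  "inf_monotone le Phi \<longleftrightarrow>
     (\<forall>S. (\<forall>(x, y)\<in>S. le x y) \<longrightarrow> le (Phi (fst ` S)) (Phi (snd ` S)))"

definition bilattice :: "('b \<Rightarrow> 'b \<Rightarrow> bool) \<Rightarrow> ('b \<Rightarrow> 'b \<Rightarrow> bool) \<Rightarrow> ('b \<Rightarrow> 'b) \<Rightarrow> bool" where
  "bilattice lt lk neg \<longleftrightarrow>
     complete_order lt \<and> complete_order lk \<and>
     (\<forall>Phi\<in>{linf lt, lsup lt, linf lk, lsup lk}. \<forall>le\<in>{lt, lk}. inf_monotone le Phi) \<and>
     (\<forall>op\<in>{bmeet lt, bjoin lt, bmeet lk, bjoin lk}. \<forall>Phi\<in>{linf lt, lsup lt, linf lk, lsup lk}.
        \<forall>a B. B \<noteq> {} \<longrightarrow> op a (Phi B) = Phi (op a ` B)) \<and>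
     (\<forall>x y. lt x y \<longrightarrow> lt (neg y) (neg x)) \<and>
     (\<forall>x y. lk x y \<longrightarrow> lk (neg x) (neg y)) \<and>
     (\<forall>x. neg (neg x) = x)"

text \<open>V(B): maps from ground atoms (type 'g) to B, pointwise orders and operations.\<close>
definition pw_le :: "('b \<Rightarrow> 'b \<Rightarrow> bool) \<Rightarrow> ('g \<Rightarrow> 'b) \<Rightarrow> ('g \<Rightarrow> 'b) \<Rightarrow> bool" where
  "pw_le le v w \<longleftrightarrow> (\<forall>p. le (v p) (w p))"

definition pw :: "('b \<Rightarrow> 'b \<Rightarrow> 'b) \<Rightarrow> ('g \<Rightarrow> 'b) \<Rightarrow> ('g \<Rightarrow> 'b) \<Rightarrow> ('g \<Rightarrow> 'b)" where
  "pw f v w = (\<lambda>p. f (v p) (w p))"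

end

theory Submission
  imports Defs
begin

lemma co_porder: "complete_order le \<Longrightarrow> porder le"
  by (simp add: complete_order_def)

lemma lsup_is: assumes "complete_order le" shows "is_lub le A (lsup le A)"
proof -
  from assms obtain x where x: "is_lub le A x" by (auto simp: complete_order_def)
  have "\<And>y. is_lub le A y \<Longrightarrow> y = x"
    using x co_porder[OF assms] unfolding is_lub_def porder_def by blast
  then show ?thesis unfolding lsup_def using x by (metis theI)
qed

lemma linf_is: assumes "complete_order le" shows "is_glb le A (linf le A)"
proof -
  from assms obtain x where x: "is_glb le A x" by (auto simp: complete_order_def)
  have "\<And>y. is_glb le A y \<Longrightarrow> y = x"
    using x co_porder[OF assms] unfolding is_glb_def porder_def by blast
  then show ?thesis unfolding linf_def using x by (metis theI)
qed

lemma join_ub1: "complete_order le \<Longrightarrow> le x (bjoin le x y)"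
  using lsup_is[of le "{x,y}"] by (simp add: bjoin_def is_lub_def)
lemma join_ub2: "complete_order le \<Longrightarrow> le y (bjoin le x y)"
  using lsup_is[of le "{x,y}"] by (simp add: bjoin_def is_lub_def)
lemma meet_lb1: "complete_order le \<Longrightarrow> le (bmeet le x y) x"
  using linf_is[of le "{x,y}"] by (simp add: bmeet_def is_glb_def)
lemma meet_lb2: "complete_order le \<Longrightarrow> le (bmeet le x y) y"
  using linf_is[of le "{x,y}"] by (simp add: bmeet_def is_glb_def)

lemma join_eq: assumes "complete_order le" "le x y" shows "bjoin le x y = y"
proof -
  have "le (bjoin le x y) y"
    using lsup_is[OF assms(1), of "{x,y}"] assms co_porder[OF assms(1)]
    by (simp add: bjoin_def is_lub_def porder_def)
  moreover have "le y (bjoin le x y)" using join_ub2[OF assms(1)] .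
  ultimately show ?thesis using co_porder[OF assms(1)] unfolding porder_def by blast
qed

lemma meet_eq: assumes "complete_order le" "le x y" shows "bmeet le x y = x"
proof -
  have "le x (bmeet le x y)"
    using linf_is[OF assms(1), of "{x,y}"] assms co_porder[OF assms(1)]
    by (simp add: bmeet_def is_glb_def porder_def)
  moreover have "le (bmeet le x y) x" using meet_lb1[OF assms(1)] .
  ultimately show ?thesis using co_porder[OF assms(1)] unfolding porder_def by blast
qed

lemma join_comm: "bjoin le x y = bjoin le y x"
  by (simp add: bjoin_def insert_commute)
lemma meet_comm: "bmeet le x y = bmeet le y x"
  by (simp add: bmeet_def insert_commute)

lemma bot_least: "complete_order le \<Longrightarrow> le (bbot le) x"
  using linf_is[of le UNIV] by (simp add: bbot_def is_glb_def)

lemma mono2: assumes "inf_monotone le Phi" "le x1 y1" "le x2 y2"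
  shows "le (Phi {x1,x2}) (Phi {y1,y2})"
proof -
  have "le (Phi (fst ` {(x1,y1),(x2,y2)})) (Phi (snd ` {(x1,y1),(x2,y2)}))"
    using assms(1) unfolding inf_monotone_def
    by (rule allE[where x="{(x1,y1),(x2,y2)}"]) (use assms(2,3) in simp)
  then show ?thesis by simp
qed

lemma trans': "complete_order le \<Longrightarrow> le x y \<Longrightarrow> le y z \<Longrightarrow> le x z"
  using co_porder unfolding porder_def by blast
lemma refl': "complete_order le \<Longrightarrow> le x x"
  using co_porder unfolding porder_def by blast

theorem mainTheorem10:
  fixes lt lk :: "'b \<Rightarrow> 'b \<Rightarrow> bool" and neg :: "'b \<Rightarrow> 'b"
    and a b c :: "'g \<Rightarrow> 'b"
  assumes "bilattice lt lk neg"
    and "pw_le lt a b" and "pw_le lt b c"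
  shows "pw_le lk (pw (bmeet lk) (pw (bmeet lt) a (\<lambda>_. bbot lk)) (pw (bjoin lt) c (\<lambda>_. bbot lk)))
            (\<lambda>_. bbot lk)
       \<and> pw_le lk (pw (bmeet lk) (pw (bjoin lt) a (\<lambda>_. bbot lk)) c) b
       \<and> pw_le lk (pw (bmeet lk) (pw (bmeet lt) a (\<lambda>_. bbot lk)) (pw (bmeet lt) c (\<lambda>_. bbot lk))) b"
proof -
  note bl = assms(1)[unfolded bilattice_def]
  have ct: "complete_order lt" using conjunct1[OF bl] .
  have ck: "complete_order lk" using conjunct1[OF conjunct2[OF bl]] .
  note bl3 = conjunct1[OF conjunct2[OF conjunct2[OF bl]]]
  have mj: "inf_monotone lk (lsup lt)" and mm: "inf_monotone lk (linf lt)"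
  proof -
    from bl3 show "inf_monotone lk (lsup lt)" "inf_monotone lk (linf lt)" by simp_all
  qed
  have J: "lk x1 y1 \<Longrightarrow> lk x2 y2 \<Longrightarrow> lk (bjoin lt x1 x2) (bjoin lt y1 y2)" for x1 x2 y1 y2
    using mono2[OF mj] by (simp add: bjoin_def)
  have M: "lk x1 y1 \<Longrightarrow> lk x2 y2 \<Longrightarrow> lk (bmeet lt x1 x2) (bmeet lt y1 y2)" for x1 x2 y1 y2
    using mono2[OF mm] by (simp add: bmeet_def)
  define u where "u = bbot lk"
  have U: "lk u x" for x unfolding u_def using bot_least[OF ck] .
  have R: "lk x x" for x using refl'[OF ck] .
  have T: "lk x y \<Longrightarrow> lk y z \<Longrightarrow> lk x z" for x y z using trans'[OF ck] .
  have P1: "lk (bmeet lk (bmeet lt A u) (bjoin lt C u)) u" for A C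
  proof -
    let ?w = "bmeet lk (bmeet lt A u) (bjoin lt C u)"
    have "lk (bmeet lt (bjoin lt u ?w) ?w) (bmeet lt (bjoin lt u (bmeet lt A u)) (bjoin lt C u))"
      by (rule M[OF J[OF R meet_lb1[OF ck]] meet_lb2[OF ck]])
    moreover have "bmeet lt (bjoin lt u ?w) ?w = ?w"
    proof -
      have j1: "lt ?w (bjoin lt u ?w)" by (rule join_ub2[OF ct])
      have "bmeet lt ?w (bjoin lt u ?w) = ?w" using ct j1 by (rule meet_eq)
      then show ?thesis by (rule trans[OF meet_comm])
    qed
    moreover have "bjoin lt u (bmeet lt A u) = u"
    proof -
      have j1: "lt (bmeet lt A u) u" by (rule meet_lb2[OF ct])
      have "bjoin lt (bmeet lt A u) u = u" using ct j1 by (rule join_eq)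
      then show ?thesis by (rule trans[OF join_comm])
    qed
    moreover have "bmeet lt u (bjoin lt C u) = u"
    proof -
      have j1: "lt u (bjoin lt C u)" by (rule join_ub2[OF ct])
      show ?thesis using ct j1 by (rule meet_eq)
    qed
    ultimately show ?thesis by simp
  qed
  have P2: "lt A B \<Longrightarrow> lk (bmeet lk (bjoin lt A u) C) B" for A B C
  proof -
    assume "lt A B"
    have "lk (bjoin lt A u) (bjoin lt A B)" by (rule J[OF R U])
    moreover have "bjoin lt A B = B" using ct \<open>lt A B\<close> by (rule join_eq)
    ultimately have "lk (bjoin lt A u) B" by simp
    then show ?thesis using T[OF meet_lb1[OF ck]] by blast
  qed
  have P3: "lt B C \<Longrightarrow> lk (bmeet lk X (bmeet lt C u)) B" for X B C
  proof -
    assume "lt B C"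
    have "lk (bmeet lt C u) (bmeet lt C B)" by (rule M[OF R U])
    moreover have "bmeet lt B C = B" using ct \<open>lt B C\<close> by (rule meet_eq)
    moreover have "bmeet lt C B = bmeet lt B C" by (rule meet_comm)
    ultimately have "lk (bmeet lt C u) B" by simp
    then show ?thesis using T[OF meet_lb2[OF ck]] by blast
  qed
  have ab: "lt (a p) (b p)" and bc: "lt (b p) (c p)" for p
    using assms(2,3) unfolding pw_le_def by auto
  show ?thesis
    unfolding pw_le_def pw_def u_def[symmetric]
    using P1 P2[OF ab] P3[OF bc] by simp
qed

end
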